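(* Let $\theta\in\mathrm{Mat}_{r\times r}(\bar k[[\sigma]])$, $a\in\mathrm{Mat}_{r\times r}(\bar k)$, $e\in\mathrm{Mat}_{r\times s}(\bar k)$, $b\in\mathrm{Mat}_{s\times s}(\bar k)$ satisfy $\partial\theta=a$, $(a-T\mathbf 1_r)^r=0$, $ae=eb$, $(b-T\mathbf 1_s)^s=0$. Then there exists a unique $E\in\mathrm{Mat}_{r\times s}(\bar k[[\sigma]])$ with $\theta E=Eb$ and $\partial E=e$.
   Context: $\bar k$ is the algebraic closure of $k=\mathbb F_q(T)$. $\bar k[[\sigma]]$ is the ring of formal series $\sum_{i\ge0}a_i\sigma^i$ ($a_i\in\bar k$) with multiplication $(\sum_ia_i\sigma^i)(\sum_jb_j\sigma^j)=\sum_{i,j}a_ib_j^{q^{-i}}\sigma^{i+j}$ (the completion of the skew polynomial ring with $\sigma x=x^{q^{-1}}\sigma$). For a matrix $\phi=\sum_i a_{(i)}\sigma^i$ with $a_{(i)}$ matrices over $\bar k$, $\partial\phi:=a_{(0)}$. $\mathbf 1_n$ is the identity matrix. *)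

theory Defs
  imports "HOL-Computational_Algebra.Polynomial" "Jordan_Normal_Form.Matrix"
begin

text \<open>The field 'k (an alg_closed_field) together with T and q is required to be the
algebraic closure of k = F_q(T): 'k has prime characteristic p, q = p^m with m > 0,
T is transcendental over the prime field F_p, and every element of 'k is algebraic
over F_p(T) (equivalently over F_q(T)).  Such a field is isomorphic to the algebraic
closure of F_q(T), with T corresponding to the variable.\<close>

definition Fp_T_elems :: "'k::field \<Rightarrow> 'k set" where
  "Fp_T_elems T = {poly g T | g. \<forall>j. coeff g j \<in> range of_nat}"

definition is_alg_closure_FqT :: "nat \<Rightarrow> 'k::alg_closed_field \<Rightarrow> bool" where
  "is_alg_closure_FqT q T \<longleftrightarrow>
     prime CHAR('k) \<and> (\<exists>m>0. q = CHAR('k) ^ m) \<and>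
     (\<forall>g::'k poly. (\<forall>j. coeff g j \<in> range of_nat) \<and> poly g T = 0 \<longrightarrow> g = 0) \<and>
     (\<forall>x::'k. \<exists>f::'k poly. f \<noteq> 0 \<and> (\<forall>i. coeff f i \<in> Fp_T_elems T) \<and> poly f x = 0)"

definition qroot :: "nat \<Rightarrow> nat \<Rightarrow> 'k::field \<Rightarrow> 'k" where
  "qroot q l x = (THE y. y ^ (q ^ l) = x)"

text \<open>A matrix over the skew power series ring kbar[[sigma]] is represented by its
sequence of coefficient matrices: phi = sum_n (phi n) sigma^n.
Product of an (r x t) and a (t x s) such matrix, using sigma x = x^(q^-1) sigma:
(sum_i a_i sigma^i)(sum_j b_j sigma^j) = sum_{i,j} a_i b_j^(q^-i) sigma^(i+j).\<close>
definition skew_mult :: "nat \<Rightarrow> nat \<Rightarrow> nat \<Rightarrow> nat \<Rightarrow> (nat \<Rightarrow> 'k::field mat) \<Rightarrow> (nat \<Rightarrow> 'k mat) \<Rightarrow> (nat \<Rightarrow> 'k mat)" where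
  "skew_mult q r t s \<theta> E = (\<lambda>n. mat r s (\<lambda>(i,j).
      \<Sum>l\<le>n. \<Sum>k<t. \<theta> l $$ (i,k) * qroot q l (E (n - l) $$ (k,j))))"

definition const_series :: "nat \<Rightarrow> nat \<Rightarrow> 'k::field mat \<Rightarrow> (nat \<Rightarrow> 'k mat)" where
  "const_series r s b = (\<lambda>n. if n = 0 then b else 0\<^sub>m r s)"

definition skew_partial :: "(nat \<Rightarrow> 'k mat) \<Rightarrow> 'k mat" where
  "skew_partial \<phi> = \<phi> 0"

end

theory Submission
  imports Defs "HOL-Computational_Algebra.Primes" "Jordan_Normal_Form.Determinant"
begin


lemma frob_inj:
  fixes x y :: "'k::field"
  assumes "prime CHAR('k)" "N = CHAR('k)^j" "x^N = y^N" shows "x = y"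
proof -
  have "((x - y) + y)^N = (x-y)^N + y^N" by (rule freshmans_dream'[OF assms(1,2)])
  hence "(x-y)^N = 0" using assms(3) by simp
  thus ?thesis by simp
qed

lemma qroot_pow:
  assumes "prime CHAR('k)" "q = CHAR('k)^m"
  shows "(qroot q l (x::'k::alg_closed_field))^(q^l) = x"
proof -
  have N: "q^l = CHAR('k)^(m*l)" by (simp add: assms power_mult)
  have pos: "q^l > 0" using N prime_gt_0_nat[OF assms(1)] by simp
  obtain y where y: "y^(q^l) = x" using nth_root_exists[OF pos] by blast
  have "\<exists>!y. y^(q^l) = x" using y frob_inj[OF assms(1) N] by blast
  thus ?thesis unfolding qroot_def by (rule theI')
qed

lemma qroot_eq:
  assumes "prime CHAR('k)" "q = CHAR('k)^m" "y^(q^l) = (x::'k::alg_closed_field)"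
  shows "qroot q l x = y"
proof -
  have N: "q^l = CHAR('k)^(m*l)" by (simp add: assms power_mult)
  show ?thesis using frob_inj[OF assms(1) N] qroot_pow[OF assms(1,2)] assms(3) by metis
qed

lemma qroot_hom:
  assumes "prime CHAR('k)" "q = CHAR('k)^m"
  shows "comm_ring_hom (qroot q l :: 'k::alg_closed_field \<Rightarrow> 'k)"
proof -
  have N: "q^l = CHAR('k)^(m*l)" by (simp add: assms power_mult)
  have pos: "q^l > 0" using N prime_gt_0_nat[OF assms(1)] by simp
  note P = qroot_pow[OF assms(1,2)] and E = qroot_eq[OF assms(1,2)]
  show ?thesis
  proof
    show "qroot q l (0::'k) = 0" by (rule E) (use pos in simp)
    show "qroot q l (1::'k) = 1" by (rule E) simp
    fix x y :: 'k
    show "qroot q l (x * y) = qroot q l x * qroot q l y"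
      by (rule E) (simp add: power_mult_distrib P)
    show "qroot q l (x + y) = qroot q l x + qroot q l y"
      by (rule E) (simp add: freshmans_dream'[OF assms(1) N] P)
  qed
qed

lemma qroot_0: "qroot q 0 x = x"
  unfolding qroot_def by simp

lemma pow_mat_Suc_left: "A \<in> carrier_mat n n \<Longrightarrow> A ^\<^sub>m Suc k = A * A ^\<^sub>m k"
proof (induction k)
  case 0 then show ?case by simp
next
  case (Suc k)
  have "A ^\<^sub>m Suc (Suc k) = (A * A ^\<^sub>m k) * A" using Suc by simp
  also have "\<dots> = A * (A ^\<^sub>m k * A)" by (rule assoc_mult_mat[OF Suc.prems pow_carrier_mat[OF Suc.prems] Suc.prems])
  finally show ?case by simp
qed


lemma sylv_unique:
  fixes A Ainv M X :: "'k::field mat"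
  assumes A: "A \<in> carrier_mat r r" and Ai: "Ainv \<in> carrier_mat r r" and inv: "Ainv * A = 1\<^sub>m r"
    and M: "M \<in> carrier_mat s s" and nil: "M ^\<^sub>m s = 0\<^sub>m s s"
    and X: "X \<in> carrier_mat r s" and eq: "A * X = X * M"
  shows "X = 0\<^sub>m r s"
proof -
  have X1: "X = Ainv * X * M"
  proof -
    have "X = (Ainv * A) * X" using inv X by simp
    also have "\<dots> = Ainv * (A * X)" using Ai A X by simp
    also have "\<dots> = Ainv * X * M" using Ai X M eq by simp
    finally show ?thesis .
  qed
  have k: "X = Ainv ^\<^sub>m k * X * M ^\<^sub>m k" for k
  proof (induction k)
    case 0 then show ?case using X Ai M by simp
  next
    case (Suc k)
    have c1: "Ainv ^\<^sub>m k \<in> carrier_mat r r" "M ^\<^sub>m k \<in> carrier_mat s s" using Ai M by auto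
    have c2: "Ainv ^\<^sub>m k * Ainv \<in> carrier_mat r r" "M * M ^\<^sub>m k \<in> carrier_mat s s"
      "Ainv * X \<in> carrier_mat r s" "X * M \<in> carrier_mat r s" "Ainv * (X * M) \<in> carrier_mat r s"
      "Ainv * X * M \<in> carrier_mat r s"
      using c1 Ai X M by (auto intro: mult_carrier_mat)
    have "Ainv ^\<^sub>m Suc k * X * M ^\<^sub>m Suc k = Ainv ^\<^sub>m k * Ainv * X * (M * M ^\<^sub>m k)"
      using pow_mat_Suc_left[OF M] by simp
    also have "\<dots> = Ainv ^\<^sub>m k * (Ainv * X) * (M * M ^\<^sub>m k)"
      by (simp only: assoc_mult_mat[OF c1(1) Ai X])
    also have "\<dots> = Ainv ^\<^sub>m k * (Ainv * X) * M * M ^\<^sub>m k"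
      by (rule assoc_mult_mat[OF mult_carrier_mat[OF c1(1) c2(3)] M c1(2), symmetric])
    also have "\<dots> = Ainv ^\<^sub>m k * (Ainv * X * M) * M ^\<^sub>m k"
      by (simp only: assoc_mult_mat[OF c1(1) c2(3) M])
    also have "\<dots> = X" using X1 Suc by simp
    finally show ?case by simp
  qed
  show ?thesis using k[of s] nil Ai X by simp
qed

lemma sylv_exists:
  fixes A Ainv M Y :: "'k::field mat"
  assumes A: "A \<in> carrier_mat r r" and Ai: "Ainv \<in> carrier_mat r r" and inv: "A * Ainv = 1\<^sub>m r"
    and M: "M \<in> carrier_mat s s" and nil: "M ^\<^sub>m s = 0\<^sub>m s s"
    and Y: "Y \<in> carrier_mat r s"
  shows "\<exists>X \<in> carrier_mat r s. A * X = Y + X * M"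
proof -
  define P where "P = (\<lambda>X. Ainv * (Y + X * M))"
  have Pc: "X \<in> carrier_mat r s \<Longrightarrow> P X \<in> carrier_mat r s" for X
    unfolding P_def using Ai Y M by auto
  have Pd: "X \<in> carrier_mat r s \<Longrightarrow> X' \<in> carrier_mat r s \<Longrightarrow> P X - P X' = Ainv * (X - X') * M" for X X'
  proof -
    assume X: "X \<in> carrier_mat r s" and X': "X' \<in> carrier_mat r s"
    have "P X - P X' = Ainv * ((Y + X * M) - (Y + X' * M))"
      unfolding P_def using Ai X X' Y M by (subst mult_minus_distrib_mat[of _ r r]) auto
    also have "(Y + X * M) - (Y + X' * M) = (X - X') * M"
      using X X' Y M by (subst minus_mult_distrib_mat[of _ r s]) (auto intro!: eq_matI)
    moreover have "X - X' \<in> carrier_mat r s" using X X' by (simp add: minus_carrier_mat)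
    ultimately show ?thesis using Ai X X' M by simp
  qed
  have Pk: "X \<in> carrier_mat r s \<Longrightarrow> X' \<in> carrier_mat r s \<Longrightarrow>
      (P ^^ k) X \<in> carrier_mat r s \<and> (P ^^ k) X - (P ^^ k) X' = Ainv ^\<^sub>m k * (X - X') * M ^\<^sub>m k" for k X X'
  proof (induction k arbitrary: X X')
    case 0 
    have "X - X' \<in> carrier_mat r s" using 0 by (simp add: minus_carrier_mat)
    then show ?case using 0 Ai M by simp
  next
    case (Suc k)
    have c1: "Ainv ^\<^sub>m k \<in> carrier_mat r r" "M ^\<^sub>m k \<in> carrier_mat s s" using Ai M by auto
    have D: "X - X' \<in> carrier_mat r s" using Suc.prems by (simp add: minus_carrier_mat)
    have c2: "Ainv ^\<^sub>m k * Ainv \<in> carrier_mat r r" "M * M ^\<^sub>m k \<in> carrier_mat s s"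
      "Ainv * (X - X') \<in> carrier_mat r s" "(X - X') * M \<in> carrier_mat r s" "Ainv * ((X - X') * M) \<in> carrier_mat r s"
      "Ainv * (X - X') * M \<in> carrier_mat r s"
      using c1 Ai D M by (auto intro: mult_carrier_mat)
    have IH: "(P ^^ k) (P X) \<in> carrier_mat r s"
       "(P ^^ k) (P X) - (P ^^ k) (P X') = Ainv ^\<^sub>m k * (P X - P X') * M ^\<^sub>m k"
      using Suc.IH[OF Pc[OF Suc.prems(1)] Pc[OF Suc.prems(2)]] by auto
    have "Ainv ^\<^sub>m k * (P X - P X') * M ^\<^sub>m k = Ainv ^\<^sub>m k * (Ainv * (X - X') * M) * M ^\<^sub>m k"
      using Pd Suc.prems by simp
    also have "\<dots> = Ainv ^\<^sub>m k * (Ainv * (X - X')) * M * M ^\<^sub>m k"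
      by (simp only: assoc_mult_mat[OF c1(1) c2(3) M])
    also have "\<dots> = Ainv ^\<^sub>m k * (Ainv * (X - X')) * (M * M ^\<^sub>m k)"
      by (rule assoc_mult_mat[OF mult_carrier_mat[OF c1(1) c2(3)] M c1(2)])
    also have "\<dots> = Ainv ^\<^sub>m k * Ainv * (X - X') * (M * M ^\<^sub>m k)"
      by (simp only: assoc_mult_mat[OF c1(1) Ai D])
    also have "\<dots> = Ainv ^\<^sub>m Suc k * (X - X') * M ^\<^sub>m Suc k"
      using pow_mat_Suc_left[OF M] by simp
    finally show ?case using IH by (simp add: funpow_Suc_right del: funpow.simps)
  qed
  define X0 where "X0 = (P ^^ s) (0\<^sub>m r s)"
  have X0c: "X0 \<in> carrier_mat r s" using Pk[of "0\<^sub>m r s" "0\<^sub>m r s" s] unfolding X0_def by auto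
  have "P X0 - X0 = (P ^^ s) (P (0\<^sub>m r s)) - (P ^^ s) (0\<^sub>m r s)"
    unfolding X0_def by (simp add: funpow_swap1)
  also have "\<dots> = Ainv ^\<^sub>m s * (P (0\<^sub>m r s) - 0\<^sub>m r s) * M ^\<^sub>m s"
    using Pk[OF Pc] by auto
  also have "\<dots> = 0\<^sub>m r s" using nil Ai Pc[of "0\<^sub>m r s"] by (simp add: minus_carrier_mat)
  finally have "P X0 - X0 = 0\<^sub>m r s" .
  note Z = this
  have fix0: "P X0 = X0"
  proof (rule eq_matI)
    fix i j assume ij: "i < dim_row X0" "j < dim_col X0"
    have "(P X0 - X0) $$ (i,j) = 0" using Z ij X0c by simp
    thus "P X0 $$ (i, j) = X0 $$ (i, j)" using ij X0c Pc[OF X0c] by simp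
  qed (use X0c Pc[OF X0c] in auto)
  have "A * X0 = A * (Ainv * (Y + X0 * M))" using fix0 unfolding P_def by simp
  also have "\<dots> = (A * Ainv) * (Y + X0 * M)"
    using A Ai Y M X0c by (simp add: assoc_mult_mat[OF A Ai, of _ s])
  also have "\<dots> = Y + X0 * M" using inv Y M X0c by simp
  finally show ?thesis using X0c by blast
qed


lemma smult_mat_vec: "B \<in> carrier_mat n m \<Longrightarrow> v \<in> carrier_vec m \<Longrightarrow>
   (k \<cdot>\<^sub>m B) *\<^sub>v v = (k::'a::field) \<cdot>\<^sub>v (B *\<^sub>v v)"
  by (intro eq_vecI) auto

lemma shift_mat_vec:
  fixes a :: "'k::field mat"
  assumes a: "a \<in> carrier_mat r r" and v: "v \<in> carrier_vec r"
  shows "(a - t \<cdot>\<^sub>m 1\<^sub>m r) *\<^sub>v v = a *\<^sub>v v - t \<cdot>\<^sub>v v"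
  using a v by (simp add: minus_mult_distrib_mat_vec[of a r r] smult_mat_vec[of _ r r])

lemma shifted_inv:
  fixes a :: "'k::field mat"
  assumes a: "a \<in> carrier_mat r r" and nil: "(a - T \<cdot>\<^sub>m 1\<^sub>m r) ^\<^sub>m r = 0\<^sub>m r r" and Tt: "T \<noteq> t"
  shows "\<exists>Ainv \<in> carrier_mat r r. (a - t \<cdot>\<^sub>m 1\<^sub>m r) * Ainv = 1\<^sub>m r \<and> Ainv * (a - t \<cdot>\<^sub>m 1\<^sub>m r) = 1\<^sub>m r"
proof -
  define A where "A = a - t \<cdot>\<^sub>m 1\<^sub>m r"
  define N where "N = a - T \<cdot>\<^sub>m 1\<^sub>m r"
  have Ac: "A \<in> carrier_mat r r" unfolding A_def using a by (simp add: minus_carrier_mat)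
  have Nc: "N \<in> carrier_mat r r" unfolding N_def using a by (simp add: minus_carrier_mat)
  have "det A \<noteq> 0"
  proof
    assume "det A = 0"
    then obtain v where v: "v \<in> carrier_vec r" "v \<noteq> 0\<^sub>v r" "A *\<^sub>v v = 0\<^sub>v r"
      using det_0_iff_vec_prod_zero_field[OF Ac] by auto
    have av: "a *\<^sub>v v = t \<cdot>\<^sub>v v"
    proof -
      have "a *\<^sub>v v - t \<cdot>\<^sub>v v = 0\<^sub>v r" using v shift_mat_vec[OF a v(1), of t] unfolding A_def by simp
      thus ?thesis using v(1) a by (intro eq_vecI) (auto dest!: arg_cong[where f="\<lambda>w. w $ _"] simp: vec_eq_iff)
    qed
    have Nv: "N *\<^sub>v v = (t - T) \<cdot>\<^sub>v v"
      unfolding N_def using shift_mat_vec[OF a v(1), of T] av v(1)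
      by (auto intro!: eq_vecI simp: algebra_simps)
    have Nk: "(N ^\<^sub>m k) *\<^sub>v v = (t - T)^k \<cdot>\<^sub>v v" for k
    proof (induction k)
      case 0 then show ?case using v(1) Nc by simp
    next
      case (Suc k)
      have "(N ^\<^sub>m Suc k) *\<^sub>v v = N ^\<^sub>m k *\<^sub>v (N *\<^sub>v v)"
        using Nc v(1) by (simp add: assoc_mult_mat_vec[of _ r r N r])
      also have "\<dots> = (t - T) \<cdot>\<^sub>v (N ^\<^sub>m k *\<^sub>v v)" unfolding Nv
        by (rule mult_mat_vec[OF pow_carrier_mat[OF Nc] v(1)])
      finally show ?case using Suc by (auto intro!: eq_vecI)
    qed
    have z: "0\<^sub>m r r *\<^sub>v v = 0\<^sub>v r" using v(1) by (intro eq_vecI) auto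
    have "(t - T)^r \<cdot>\<^sub>v v = 0\<^sub>v r" using Nk[of r] nil v(1) z unfolding N_def by simp
    moreover have "(t - T)^r \<noteq> 0" using Tt by simp
    ultimately have "v = 0\<^sub>v r" using v(1)
      by (intro eq_vecI) (auto dest!: arg_cong[where f="\<lambda>w. w $ _"] simp: vec_eq_iff)
    with v(2) show False ..
  qed
  from det_non_zero_imp_unit[OF Ac this, of "()"]
  obtain B where "B \<in> carrier_mat r r" "A * B = 1\<^sub>m r" "B * A = 1\<^sub>m r"
    unfolding Units_def ring_mat_def by auto
  thus ?thesis unfolding A_def by blast
qed


lemma sylv_full:
  fixes a b' :: "'k::field mat"
  assumes a: "a \<in> carrier_mat r r" and nila: "(a - T \<cdot>\<^sub>m 1\<^sub>m r) ^\<^sub>m r = 0\<^sub>m r r"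
    and b: "b' \<in> carrier_mat s s" and nilb: "(b' - t \<cdot>\<^sub>m 1\<^sub>m s) ^\<^sub>m s = 0\<^sub>m s s"
    and Tt: "T \<noteq> t" and Y: "Y \<in> carrier_mat r s"
  shows "\<exists>X \<in> carrier_mat r s. a * X = Y + X * b'"
    and "X \<in> carrier_mat r s \<Longrightarrow> X' \<in> carrier_mat r s \<Longrightarrow> a * X = Y + X * b' \<Longrightarrow> a * X' = Y + X' * b' \<Longrightarrow> X = X'"
proof -
  define A where "A = a - t \<cdot>\<^sub>m 1\<^sub>m r"
  define M where "M = b' - t \<cdot>\<^sub>m 1\<^sub>m s"
  have Ac: "A \<in> carrier_mat r r" unfolding A_def using a by (simp add: minus_carrier_mat)
  have Mc: "M \<in> carrier_mat s s" unfolding M_def using b by (simp add: minus_carrier_mat)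
  obtain Ainv where Ai: "Ainv \<in> carrier_mat r r" "A * Ainv = 1\<^sub>m r" "Ainv * A = 1\<^sub>m r"
    using shifted_inv[OF a nila Tt] unfolding A_def by blast
  have idA: "A * X = a * X - t \<cdot>\<^sub>m X" if X: "X \<in> carrier_mat r s" for X
  proof -
    have "A * X = a * X - (t \<cdot>\<^sub>m 1\<^sub>m r) * X" unfolding A_def using a X
      by (simp add: minus_mult_distrib_mat[of _ r r])
    also have "(t \<cdot>\<^sub>m 1\<^sub>m r) * X = t \<cdot>\<^sub>m X" using X by (simp add: mult_smult_assoc_mat[of _ r r])
    finally show ?thesis .
  qed
  have idM: "X * M = X * b' - t \<cdot>\<^sub>m X" if X: "X \<in> carrier_mat r s" for X
  proof -
    have "X * M = X * b' - X * (t \<cdot>\<^sub>m 1\<^sub>m s)" unfolding M_def using b X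
      by (simp add: mult_minus_distrib_mat[of _ r s])
    also have "X * (t \<cdot>\<^sub>m 1\<^sub>m s) = t \<cdot>\<^sub>m X" using X by (simp add: mult_smult_distrib[OF X one_carrier_mat])
    finally show ?thesis .
  qed
  have equiv: "A * X = Y + X * M \<longleftrightarrow> a * X = Y + X * b'" if X: "X \<in> carrier_mat r s" for X
  proof -
    have "A * X = Y + X * M \<longleftrightarrow> (\<forall>i<r. \<forall>j<s. (A * X) $$ (i,j) = (Y + X * M) $$ (i,j))"
      using X Y Ac Mc by (auto simp: mat_eq_iff)
    also have "\<dots> \<longleftrightarrow> (\<forall>i<r. \<forall>j<s. (a * X) $$ (i,j) = (Y + X * b') $$ (i,j))"
      using X Y a b by (simp add: idA idM)
    also have "\<dots> \<longleftrightarrow> a * X = Y + X * b'"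
      using X Y a b by (auto simp: mat_eq_iff)
    finally show ?thesis .
  qed
  show "\<exists>X \<in> carrier_mat r s. a * X = Y + X * b'"
    using sylv_exists[OF Ac Ai(1,2) Mc _ Y] nilb equiv unfolding M_def by blast
  assume X: "X \<in> carrier_mat r s" and X': "X' \<in> carrier_mat r s"
    and e1: "a * X = Y + X * b'" and e2: "a * X' = Y + X' * b'"
  have D: "X - X' \<in> carrier_mat r s" using X' by (simp add: minus_carrier_mat)
  have "A * (X - X') = (X - X') * M"
  proof -
    have "A * (X - X') = A * X - A * X'" using Ac X X' by (simp add: mult_minus_distrib_mat[of _ r r])
    also have "\<dots> = (Y + X * M) - (Y + X' * M)" using equiv[OF X] equiv[OF X'] e1 e2 by simp
    also have "\<dots> = X * M - X' * M" using X X' Y Mc by (auto simp: mat_eq_iff)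
    also have "\<dots> = (X - X') * M" using X X' Mc by (simp add: minus_mult_distrib_mat[of _ r s])
    finally show ?thesis .
  qed
  from sylv_unique[OF Ac Ai(1,3) Mc _ D this] nilb have "X - X' = 0\<^sub>m r s" unfolding M_def by simp
  thus "X = X'" using X X' by (auto simp: mat_eq_iff dest!: arg_cong[where f="\<lambda>Z. Z $$ (_,_)"])
qed


lemma rec_exists:
  fixes G :: "nat \<Rightarrow> (nat \<Rightarrow> 'a) \<Rightarrow> 'a"
  assumes "\<And>n f g. (\<And>m. m < n \<Longrightarrow> f m = g m) \<Longrightarrow> G n f = G n g"
  shows "\<exists>E. \<forall>n. E n = G n E"
proof -
  define E where "E = wfrec {(x, y::nat). x < y} (\<lambda>f n. G n f)"
  have "E n = G n E" for n
  proof -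
    have "E n = G n (cut E {(x, y::nat). x < y} n)" unfolding E_def by (rule wfrec[OF wf_less])
    also have "\<dots> = G n E" by (rule assms) (simp add: cut_apply)
    finally show ?thesis .
  qed
  thus ?thesis by blast
qed

definition Rm :: "nat \<Rightarrow> nat \<Rightarrow> nat \<Rightarrow> (nat \<Rightarrow> 'k::field mat) \<Rightarrow> (nat \<Rightarrow> 'k mat) \<Rightarrow> nat \<Rightarrow> 'k mat" where
  "Rm q r s \<theta> E n = mat r s (\<lambda>(i,j). \<Sum>l\<in>{1..n}. \<Sum>k<r. \<theta> l $$ (i,k) * qroot q l (E (n - l) $$ (k,j)))"

lemma Rm_cong: "(\<And>m. m < n \<Longrightarrow> E m = E' m) \<Longrightarrow> Rm q r s \<theta> E n = Rm q r s \<theta> E' n"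
  unfolding Rm_def by (intro cong_mat refl sum.cong) auto

lemma skew_lhs:
  assumes "\<theta> 0 = a" "E n \<in> carrier_mat r s" "a \<in> carrier_mat r r"
  shows "skew_mult q r r s \<theta> E n = a * E n + Rm q r s \<theta> E n"
proof (rule eq_matI)
  fix i j assume ij: "i < dim_row (a * E n + Rm q r s \<theta> E n)" "j < dim_col (a * E n + Rm q r s \<theta> E n)"
  hence ij: "i < r" "j < s" using assms by (auto simp: Rm_def)
  let ?f = "\<lambda>l. \<Sum>k<r. \<theta> l $$ (i,k) * qroot q l (E (n - l) $$ (k,j))"
  have "{..n} = insert 0 {1..n}" by auto
  hence "(\<Sum>l\<le>n. ?f l) = ?f 0 + (\<Sum>l\<in>{1..n}. ?f l)" by simp
  moreover have "?f 0 = (a * E n) $$ (i,j)"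
    using assms ij by (simp add: qroot_0 scalar_prod_def lessThan_atLeast0)
  ultimately show "skew_mult q r r s \<theta> E n $$ (i, j) = (a * E n + Rm q r s \<theta> E n) $$ (i, j)"
    using ij assms by (simp add: skew_mult_def Rm_def)
qed (use assms in \<open>auto simp: skew_mult_def Rm_def\<close>)

lemma skew_rhs:
  fixes b :: "'k::field mat"
  assumes "E n \<in> carrier_mat r s" "b \<in> carrier_mat s s" "\<And>l. qroot q l (0::'k) = 0"
  shows "skew_mult q r s s E (const_series s s b) n = E n * map_mat (qroot q n) b"
proof (rule eq_matI)
  fix i j assume ij: "i < dim_row (E n * map_mat (qroot q n) b)" "j < dim_col (E n * map_mat (qroot q n) b)"
  hence ij: "i < r" "j < s" using assms by auto
  let ?f = "\<lambda>l. \<Sum>k<s. E l $$ (i,k) * qroot q l (const_series s s b (n - l) $$ (k,j))"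
  have "(\<Sum>l\<le>n. ?f l) = ?f n + (\<Sum>l<n. ?f l)"
    by (simp add: lessThan_Suc_atMost[symmetric])
  moreover have "(\<Sum>l<n. ?f l) = 0"
    by (intro sum.neutral) (use ij assms in \<open>auto simp: const_series_def assms(3)\<close>)
  moreover have "?f n = (E n * map_mat (qroot q n) b) $$ (i,j)"
    using assms ij by (simp add: const_series_def scalar_prod_def lessThan_atLeast0)
  ultimately show "skew_mult q r s s E (const_series s s b) n $$ (i, j) = (E n * map_mat (qroot q n) b) $$ (i, j)"
    using ij assms by (simp add: skew_mult_def)
qed (use assms in \<open>auto simp: skew_mult_def\<close>)


lemma add_eq_shift:
  fixes P :: "'k::field mat"
  shows "P \<in> carrier_mat r s \<Longrightarrow> R \<in> carrier_mat r s \<Longrightarrow> W \<in> carrier_mat r s \<Longrightarrow> (P + R = W) \<longleftrightarrow> (P = -R + W)"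
  by (auto simp: mat_eq_iff algebra_simps)

theorem lemma4:
  fixes T :: "'k::alg_closed_field" and q r s :: nat
    and \<theta> :: "nat \<Rightarrow> 'k mat" and a e b :: "'k mat"
  assumes "is_alg_closure_FqT q T"
    and "\<forall>i. \<theta> i \<in> carrier_mat r r"
    and "a \<in> carrier_mat r r" and "e \<in> carrier_mat r s" and "b \<in> carrier_mat s s"
    and "skew_partial \<theta> = a"
    and "(a - T \<cdot>\<^sub>m 1\<^sub>m r) ^\<^sub>m r = 0\<^sub>m r r"
    and "a * e = e * b"
    and "(b - T \<cdot>\<^sub>m 1\<^sub>m s) ^\<^sub>m s = 0\<^sub>m s s"
  shows "\<exists>!E. (\<forall>i. E i \<in> carrier_mat r s)
              \<and> skew_mult q r r s \<theta> E = skew_mult q r s s E (const_series s s b)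
              \<and> skew_partial E = e"
proof -
  from assms(1) obtain m where p: "prime CHAR('k)" "m > 0" "q = CHAR('k)^m"
    and trans: "\<forall>g::'k poly. (\<forall>j. coeff g j \<in> range of_nat) \<and> poly g T = 0 \<longrightarrow> g = 0"
    unfolding is_alg_closure_FqT_def by blast
  have hom: "comm_ring_hom (qroot q l :: 'k \<Rightarrow> 'k)" for l using qroot_hom[OF p(1) p(3)] .
  have q0: "qroot q l (0::'k) = 0" for l using comm_ring_hom.axioms[OF hom]
    by (metis hom comm_ring_hom_def ring_hom.axioms semiring_hom.axioms(1) comm_monoid_add_hom.axioms
        monoid_add_hom.axioms(1) zero_hom.hom_zero)
  have th0: "\<theta> 0 = a" using assms(6) unfolding skew_partial_def .
  define bn where "bn n = map_mat (qroot q n) b" for n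
  define tn where "tn n = qroot q n T" for n
  have bnc: "bn n \<in> carrier_mat s s" for n unfolding bn_def using assms(5) by simp
  have bn0: "bn 0 = b" unfolding bn_def using assms(5) by (auto intro!: eq_matI simp: qroot_0)
  have nilb: "(bn n - tn n \<cdot>\<^sub>m 1\<^sub>m s) ^\<^sub>m s = 0\<^sub>m s s" for n
  proof -
    interpret h: comm_ring_hom "qroot q n :: 'k \<Rightarrow> 'k" by (rule hom)
    have "bn n - tn n \<cdot>\<^sub>m 1\<^sub>m s = map_mat (qroot q n) (b - T \<cdot>\<^sub>m 1\<^sub>m s)"
      unfolding bn_def tn_def using assms(5) by (auto intro!: eq_matI simp: h.hom_minus h.hom_mult)
    hence "(bn n - tn n \<cdot>\<^sub>m 1\<^sub>m s) ^\<^sub>m s = map_mat (qroot q n) ((b - T \<cdot>\<^sub>m 1\<^sub>m s) ^\<^sub>m s)"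
      using h.mat_hom_pow[of "b - T \<cdot>\<^sub>m 1\<^sub>m s" s s] assms(5) by (simp add: minus_carrier_mat)
    also have "\<dots> = 0\<^sub>m s s" using assms(9) by (auto intro!: eq_matI)
    finally show ?thesis .
  qed
  have Tt: "T \<noteq> tn n" if n: "n > 0" for n
  proof
    assume eq: "T = tn n"
    have Tp: "T ^ (q ^ n) = T" using qroot_pow[OF p(1) p(3), of n T] eq unfolding tn_def by simp
    have c2: "CHAR('k) \<ge> 2" using prime_ge_2_nat[OF p(1)] .
    have "q \<ge> CHAR('k)" using p(2,3) c2 by (simp add: self_le_power)
    hence q2: "q \<ge> 2" using c2 by simp
    hence "q ^ n \<ge> q" using n by (simp add: self_le_power)
    hence qn: "q ^ n \<noteq> 1" using q2 by linarith
    define g where "g = monom (1::'k) (q ^ n) - monom 1 1"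
    have m1: "(-1::'k) = of_nat (CHAR('k) - 1)" using c2 by (simp add: of_nat_diff)
    have "\<forall>j. coeff g j \<in> range of_nat"
    proof
      fix j
      have "coeff g j = (if q ^ n = j then 1 else 0) - (if 1 = j then 1 else 0)"
        unfolding g_def by (simp add: coeff_monom)
      then show "coeff g j \<in> range of_nat" using qn m1
        by (auto simp del: of_nat_diff intro: range_eqI[of _ _ 1] range_eqI[of _ _ 0]
              range_eqI[of _ _ "CHAR('k) - 1"])
    qed
    moreover have "poly g T = 0" unfolding g_def using Tp by (simp add: poly_monom)
    ultimately have "g = 0" using trans by blast
    moreover have "coeff g (q ^ n) = 1" unfolding g_def using qn by (simp add: coeff_monom eq_commute[of "Suc 0"])
    ultimately show False by simp
  qed
  note SF = sylv_full[OF assms(3,7) bnc nilb]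
  define Sol where "Sol n Y = (SOME X. X \<in> carrier_mat r s \<and> a * X = Y + X * bn n)" for n Y
  have Sol: "Sol n Y \<in> carrier_mat r s \<and> a * Sol n Y = Y + Sol n Y * bn n"
    if "Y \<in> carrier_mat r s" "n > 0" for n Y
    unfolding Sol_def by (rule someI_ex) (use SF(1)[OF Tt[OF that(2)] that(1)] in blast)
  have Rc: "Rm q r s \<theta> E n \<in> carrier_mat r s" for E n unfolding Rm_def by simp
  define G where "G n f = (if n = 0 then e else Sol n (- Rm q r s \<theta> f n))" for n f
  obtain E where E: "\<forall>n. E n = G n E"
    using rec_exists[of G] Rm_cong unfolding G_def by metis
  have Ec: "E n \<in> carrier_mat r s" for n
    using E Sol[OF _] Rc assms(4) unfolding G_def by (cases "n = 0") (auto simp: uminus_carrier_iff_mat)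
  have key: "skew_mult q r r s \<theta> F n = skew_mult q r s s F (const_series s s b) n \<longleftrightarrow>
      a * F n = - Rm q r s \<theta> F n + F n * bn n" if "F n \<in> carrier_mat r s" for F n
    using skew_lhs[where E=F and n=n and q=q and \<theta>=\<theta>, OF th0 that assms(3)] skew_rhs[where E=F and n=n and q=q, OF that assms(5) q0] add_eq_shift[of "a * F n" r s] that assms(3) Rc bnc
    unfolding bn_def by auto
  have R0: "Rm q r s \<theta> F 0 = 0\<^sub>m r s" for F unfolding Rm_def by (auto intro!: eq_matI)
  have exE: "(\<forall>i. E i \<in> carrier_mat r s)
              \<and> skew_mult q r r s \<theta> E = skew_mult q r s s E (const_series s s b)
              \<and> skew_partial E = e"
  proof (intro conjI allI ext)
    show "E i \<in> carrier_mat r s" for i by (rule Ec)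
    show "skew_partial E = e" using E unfolding skew_partial_def G_def by simp
    fix n
    show "skew_mult q r r s \<theta> E n = skew_mult q r s s E (const_series s s b) n"
    proof (cases "n = 0")
      case True
      have "E 0 = e" using E unfolding G_def by simp
      have z: "- 0\<^sub>m r s + e * b = e * b" using assms(4,5) by (auto simp: mat_eq_iff)
      have "a * E 0 = - Rm q r s \<theta> E 0 + E 0 * bn 0"
        unfolding \<open>E 0 = e\<close> R0 bn0 z by (rule assms(8))
      then show ?thesis unfolding key[OF Ec] using True by simp
    next
      case False
      have "E n = Sol n (- Rm q r s \<theta> E n)" using E False unfolding G_def by simp
      then show ?thesis unfolding key[OF Ec] using Sol[OF _ ] Rc False
        by (simp add: uminus_carrier_iff_mat)
    qed
  qed
  show ?thesis
  proof (rule ex_ex1I)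
    show "\<exists>E. (\<forall>i. E i \<in> carrier_mat r s)
              \<and> skew_mult q r r s \<theta> E = skew_mult q r s s E (const_series s s b)
              \<and> skew_partial E = e" using exE by blast
    fix E1 E2
    assume H1: "(\<forall>i. E1 i \<in> carrier_mat r s)
              \<and> skew_mult q r r s \<theta> E1 = skew_mult q r s s E1 (const_series s s b)
              \<and> skew_partial E1 = e"
      and H2: "(\<forall>i. E2 i \<in> carrier_mat r s)
              \<and> skew_mult q r r s \<theta> E2 = skew_mult q r s s E2 (const_series s s b)
              \<and> skew_partial E2 = e"
    have "E1 n = E2 n" for n
    proof (induction n rule: less_induct)
      case (less n)
      show ?case
      proof (cases "n = 0")
        case True then show ?thesis using H1 H2 unfolding skew_partial_def by simp
      next
        case False
        have RR: "Rm q r s \<theta> E2 n = Rm q r s \<theta> E1 n" using less Rm_cong by metis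
        have e1: "a * E1 n = - Rm q r s \<theta> E1 n + E1 n * bn n"
          using key[of E1 n] H1 by metis
        have e2: "a * E2 n = - Rm q r s \<theta> E1 n + E2 n * bn n"
          using key[of E2 n] H2 RR by metis
        show ?thesis using SF(2)[OF Tt _ _ _ e1 e2] False H1 H2 Rc
          by (simp add: uminus_carrier_iff_mat)
      qed
    qed
    thus "E1 = E2" by blast
  qed
qed

end
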